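(* Let $t\mapsto\zeta(t)=(\xi(t),\eta(t))$, $t\in I$, be a solution of the unperturbed system $(\mathrm P_0)$ such that $\epsilon(t)\neq0$, $n^j(t)\neq0$ and $V^j(t)\neq0$ for all $j\in\{1,\dots,S\}$ and all $t\in I$. Then the Jacobian $D_\eta g_0(\zeta(t))$ is singular for every $t\in I$.
   Context: Fix integers $S\ge 2$, $C\ge 2$ and an interval $I\subset\mathbb R$. Given are continuously differentiable real functions $f_{\mathrm{vle},i}(P,T,\mathbf x)$ ($i=1,\dots,C$), $f_{\mathrm{hl}}(T,\mathbf x)$, $f_{\mathrm{hv}}(T,\mathbf y)$, $f_{\mathrm{holdup}}(L)$. Controls are continuously differentiable real functions $\epsilon,P,Q,T^{\mathrm{cond}}$ on $I$. State variables: $n^j,H^j,T^j,V^j$, $\mathbf x^j,\mathbf y^j\in\mathbb R^C$ ($j=1,\dots,S$), $L^j$ ($j=1,\dots,S-1$); a solution is a tuple of continuously differentiable state functions satisfying all equations at every $t\in I$. "$2\le j\le S-1$" marks middle-stage equations. The system $(\mathrm P_0)$ consists of: (TM) $\dot n^1=L^1-V^1$; $\dot n^j=L^j-V^j-L^{j-1}+V^{j-1}$ ($2\le j\le S-1$); $\dot n^S=-\epsilon V^S-L^{S-1}+V^{S-1}$; (CM$_0$) for $i=1,\dots,C-1$: $\dot x_i^1=\big(L^1(x_i^2-x_i^1)-V^1(y_i^1-x_i^1)\big)/n^1$; $\dot x_i^j=\big(L^j(x_i^{j+1}-x_i^j)-V^j(y_i^j-x_i^j)+V^{j-1}(y_i^{j-1}-x_i^j)\big)/n^j$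 ($2\le j\le S-1$); $\dot x_i^S=\big(\epsilon V^S(x_i^S-y_i^S)+V^{S-1}(y_i^{S-1}-x_i^S)\big)/n^S$; (EB) $\dot H^1=L^1f_{\mathrm{hl}}(T^2,\mathbf x^2)-V^1f_{\mathrm{hv}}(T^1,\mathbf y^1)+Q$; $\dot H^j=L^jf_{\mathrm{hl}}(T^{j+1},\mathbf x^{j+1})-V^jf_{\mathrm{hv}}(T^j,\mathbf y^j)-L^{j-1}f_{\mathrm{hl}}(T^j,\mathbf x^j)+V^{j-1}f_{\mathrm{hv}}(T^{j-1},\mathbf y^{j-1})$ ($2\le j\le S-1$); $\dot H^S=(1-\epsilon)V^Sf_{\mathrm{hl}}(T^{\mathrm{cond}},\mathbf y^S)-V^Sf_{\mathrm{hv}}(T^S,\mathbf y^S)-L^{S-1}f_{\mathrm{hl}}(T^S,\mathbf x^S)+V^{S-1}f_{\mathrm{hv}}(T^{S-1},\mathbf y^{S-1})$; and the algebraic equations $g_0=0$, where, with $\delta_i^j:=0$: $\mathrm{aux}^1_\delta=\sum_{i=1}^C\big(L^1(x_i^2-x_i^1-\delta_i^1)-V^1(y_i^1-x_i^1-\delta_i^1)\big)/n^1$; for $2\le j\le S-1$, $\mathrm{aux}^j_\delta=\sum_{i=1}^C\big(L^j(x_i^{j+1}-x_i^j-\delta_i^j)-V^j(y_i^j-x_i^j-\delta_i^j)+V^{j-1}(y_i^{j-1}-x_i^j-\delta_i^j)\big)/n^j$; $\mathrm{aux}^S_\delta=\sum_{i=1}^C\big(\epsilon V^S(x_i^S+\delta_i^S-y_i^S)+V^{S-1}(y_i^{S-1}-x_i^S-\delta_i^S)\big)/n^S$;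 $\mathrm{ydef}_i^j=y_i^j-f_{\mathrm{vle},i}(P,T^j,\mathbf x^j)$; $\mathrm{edef}^j=H^j-n^jf_{\mathrm{hl}}(T^j,\mathbf x^j)$; $\mathrm{xsum}^j=x_C^j-1+\sum_{i=1}^{C-1}x_i^j$; $\mathrm{hold}^j=n^j-f_{\mathrm{holdup}}(L^{j-1})$ ($j=2,\dots,S$); collected as $g_\delta=(\mathrm{aux}^S_\delta,\dots,\mathrm{aux}^1_\delta,\mathbf{ydef}^1,\dots,\mathbf{ydef}^S,\mathrm{edef}^1,\dots,\mathrm{edef}^S,\mathrm{xsum}^1,\dots,\mathrm{xsum}^S,\mathrm{hold}^2,\dots,\mathrm{hold}^S)$ with $\mathbf{ydef}^j=(\mathrm{ydef}^j_1,\dots,\mathrm{ydef}^j_C)$. Differential variables $\xi=(n^1,\dots,n^S,\hat{\mathbf x}^1,\dots,\hat{\mathbf x}^S,H^1,\dots,H^S)$, $\hat{\mathbf x}^j=(x_1^j,\dots,x_{C-1}^j)$; algebraic variables $\eta=(V^S,\dots,V^1,\mathbf y^1,\dots,\mathbf y^S,T^1,\dots,T^S,x_C^1,\dots,x_C^S,L^1,\dots,L^{S-1})$. $D_\eta g_0$ is the Jacobian of $g_0$ with respect to $\eta$ (with $\xi$ and the controls held fixed). *)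

theory Defs
  imports "HOL-Analysis.Function_Topology" "HOL-Analysis.Derivative" "Jordan_Normal_Form.Determinant"
begin

text \<open>Vectors of R^C are modelled as functions nat => real whose entries
  1..C are relevant; rv C x zeroes all other entries.\<close>
definition rv :: "nat \<Rightarrow> (nat \<Rightarrow> real) \<Rightarrow> nat \<Rightarrow> real" where
  "rv C x = (\<lambda>i. if 1 \<le> i \<and> i \<le> C then x i else 0)"

text \<open>Continuously differentiable function of the m real variables z 0, ..., z (m-1):
  it depends only on these coordinates and has continuous partial derivatives
  (continuity w.r.t. the product topology, equivalently on R^m).\<close>
definition C1_fin :: "nat \<Rightarrow> ((nat \<Rightarrow> real) \<Rightarrow> real) \<Rightarrow> bool" where
  "C1_fin m F \<longleftrightarrow>
     (\<forall>z w. (\<forall>i<m. z i = w i) \<longrightarrow> F z = F w) \<and>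
     (\<forall>k<m. \<exists>D. (\<forall>z. ((\<lambda>s. F (z(k := s))) has_real_derivative D z) (at (z k)))
                 \<and> continuous_on UNIV D)"

definition C1_real :: "(real \<Rightarrow> real) \<Rightarrow> bool" where
  "C1_real f \<longleftrightarrow> (\<exists>D. (\<forall>x. (f has_real_derivative D x) (at x)) \<and> continuous_on UNIV D)"

definition C1_on :: "real set \<Rightarrow> (real \<Rightarrow> real) \<Rightarrow> bool" where
  "C1_on I f \<longleftrightarrow> (\<exists>D. (\<forall>t\<in>I. (f has_real_derivative D t) (at t within I)) \<and> continuous_on I D)"

text \<open>Dimension of eta (= number of algebraic equations): S*C + 4*S - 1.\<close>
definition dimEta :: "nat \<Rightarrow> nat \<Rightarrow> nat" where
  "dimEta S C = S * C + 4 * S - 1"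

text \<open>Flattening of eta = (V^S..V^1, y^1..y^S, T^1..T^S, x_C^1..x_C^S, L^1..L^(S-1)).\<close>
definition eta_flat :: "nat \<Rightarrow> nat \<Rightarrow> (nat \<Rightarrow> real) \<Rightarrow> (nat \<Rightarrow> nat \<Rightarrow> real) \<Rightarrow>
    (nat \<Rightarrow> real) \<Rightarrow> (nat \<Rightarrow> real) \<Rightarrow> (nat \<Rightarrow> real) \<Rightarrow> nat \<Rightarrow> real" where
  "eta_flat S C V y T xC L l =
     (if l < S then V (S - l)
      else if l < S + S*C then y ((l - S) div C + 1) ((l - S) mod C + 1)
      else if l < S + S*C + S then T (l - (S + S*C) + 1)
      else if l < S + S*C + 2*S then xC (l - (S + S*C + S) + 1)
      else L (l - (S + S*C + 2*S) + 1))"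

text \<open>The k-th component of g_0 (delta = 0), as a function of the flat eta vector e,
  with the differential variables n, H, x_i (i < C) and controls eps, P fixed.
  Ordering: aux^S..aux^1, ydef^1..ydef^S, edef^1..edef^S, xsum^1..xsum^S, hold^2..hold^S.\<close>
definition g0_flat :: "nat \<Rightarrow> nat \<Rightarrow> (nat \<Rightarrow> real \<Rightarrow> real \<Rightarrow> (nat \<Rightarrow> real) \<Rightarrow> real) \<Rightarrow>
    (real \<Rightarrow> (nat \<Rightarrow> real) \<Rightarrow> real) \<Rightarrow> (real \<Rightarrow> real) \<Rightarrow> real \<Rightarrow> real \<Rightarrow>
    (nat \<Rightarrow> real) \<Rightarrow> (nat \<Rightarrow> real) \<Rightarrow> (nat \<Rightarrow> nat \<Rightarrow> real) \<Rightarrow> (nat \<Rightarrow> real) \<Rightarrow> nat \<Rightarrow> real" where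
  "g0_flat S C fvle fhl fhold eps P n H xh e k =
    (let V = (\<lambda>j. e (S - j));
         y = (\<lambda>j i. e (S + (j - 1) * C + (i - 1)));
         T = (\<lambda>j. e (S + S*C + (j - 1)));
         xC = (\<lambda>j. e (S + S*C + S + (j - 1)));
         L = (\<lambda>j. e (S + S*C + 2*S + (j - 1)));
         x = (\<lambda>j i. if i = C then xC j else xh j i);
         aux = (\<lambda>j.
           if j = 1 then
             (\<Sum>i=1..C. L 1 * (x 2 i - x 1 i) - V 1 * (y 1 i - x 1 i)) / n 1
           else if j = S then
             (\<Sum>i=1..C. eps * V S * (x S i - y S i) + V (S - 1) * (y (S - 1) i - x S i)) / n S
           else
             (\<Sum>i=1..C. L j * (x (j + 1) i - x j i) - V j * (y j i - x j i)
                        + V (j - 1) * (y (j - 1) i - x j i)) / n j)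
     in if k < S then aux (S - k)
        else if k < S + S*C then
          (let j = (k - S) div C + 1; i = (k - S) mod C + 1
           in y j i - fvle i P (T j) (rv C (x j)))
        else if k < S + S*C + S then
          (let j = k - (S + S*C) + 1 in H j - n j * fhl (T j) (rv C (x j)))
        else if k < S + S*C + 2*S then
          (let j = k - (S + S*C + S) + 1 in xC j - 1 + (\<Sum>i=1..C-1. x j i))
        else
          (let j = k - (S + S*C + 2*S) + 2 in n j - fhold (L (j - 1))))"

definition jac_g0 :: "nat \<Rightarrow> nat \<Rightarrow> (nat \<Rightarrow> real \<Rightarrow> real \<Rightarrow> (nat \<Rightarrow> real) \<Rightarrow> real) \<Rightarrow>
    (real \<Rightarrow> (nat \<Rightarrow> real) \<Rightarrow> real) \<Rightarrow> (real \<Rightarrow> real) \<Rightarrow> real \<Rightarrow> real \<Rightarrow>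
    (nat \<Rightarrow> real) \<Rightarrow> (nat \<Rightarrow> real) \<Rightarrow> (nat \<Rightarrow> nat \<Rightarrow> real) \<Rightarrow> (nat \<Rightarrow> real) \<Rightarrow> real mat" where
  "jac_g0 S C fvle fhl fhold eps P n H xh e =
     mat (dimEta S C) (dimEta S C)
       (\<lambda>(k, l). deriv (\<lambda>s. g0_flat S C fvle fhl fhold eps P n H xh (e(l := s)) k) (e l))"

end

theory Submission
  imports Defs
begin

lemma det_zero_col0:
  fixes A :: "real mat"
  assumes A: "A \<in> carrier_mat n n" and n: "0 < n" and z: "\<And>i. i < n \<Longrightarrow> A $$ (i,0) = 0"
  shows "det A = 0"
proof -
  have "A *\<^sub>v unit_vec n 0 = 0\<^sub>v n"
    using A n z by (intro eq_vecI) (auto simp: scalar_prod_right_unit row_def)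
  then show ?thesis
    using det_0_iff_vec_prod_zero_field[OF A] n
    by (meson unit_vec_carrier unit_vec_nonzero)
qed

lemma eV: "1 \<le> j \<Longrightarrow> j \<le> S \<Longrightarrow> eta_flat S C V y T xC L (S - j) = V j"
  by (simp add: eta_flat_def)
lemma ey: "1 \<le> j \<Longrightarrow> j \<le> S \<Longrightarrow> 1 \<le> i \<Longrightarrow> i \<le> C \<Longrightarrow>
   eta_flat S C V y T xC L (S + (j - 1) * C + (i - 1)) = y j i"
proof -
  assume a: "1 \<le> j" "j \<le> S" "1 \<le> i" "i \<le> C"
  have d: "((j - 1) * C + (i - 1)) div C = j - 1" "((j - 1) * C + (i - 1)) mod C = i - 1"
  proof -
    have C0: "C \<noteq> 0" using a by auto
    have b: "i - 1 < C" using a by auto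
    have "((j - 1) * C + (i - 1)) div C = (j-1) + (i-1) div C"
      using C0 by (metis add.commute div_mult_self2 mult.commute)
    then show "((j - 1) * C + (i - 1)) div C = j - 1" using b by simp
    show "((j - 1) * C + (i - 1)) mod C = i - 1" using b
      by (metis add.commute mod_less mod_mult_self2 mult.commute)
  qed
  have "(j - 1) * C + (i - 1) < S * C"
  proof -
    have "(j - 1) * C + (i - 1) < (j-1)*C + C" using a by simp
    also have "\<dots> = j * C" using a by (cases j) auto
    also have "\<dots> \<le> S * C" using a by simp
    finally show ?thesis .
  qed
  then have "eta_flat S C V y T xC L (S + ((j - 1) * C + (i - 1))) = y (((j - 1) * C + (i - 1)) div C + 1) (((j - 1) * C + (i - 1)) mod C + 1)"
    by (simp add: eta_flat_def del: add_diff_assoc add_diff_assoc2)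
  then show ?thesis using a unfolding d by (simp add: add.assoc del: add_diff_assoc add_diff_assoc2)
qed
lemma exC: "1 \<le> j \<Longrightarrow> j \<le> S \<Longrightarrow> eta_flat S C V y T xC L (S + S*C + S + (j - 1)) = xC j"
  by (cases j) (auto simp: eta_flat_def)
lemma eL: "1 \<le> j \<Longrightarrow> eta_flat S C V y T xC L (S + S*C + 2*S + (j - 1)) = L j"
  by (cases j) (auto simp: eta_flat_def)

definition "ey S C e j i = e (S + (j - 1) * C + (i - 1))"
definition "exx S C xh e j i = (if i = C then e (S + S*C + S + (j - 1)) else xh j i)"
definition "eL S C e j = e (S + S*C + 2*S + (j - 1))"

lemma g_xsum: "m < S \<Longrightarrow> g0_flat S C fvle fhl fhold eps P n H xh e (S+S*C+S+m)
   = e (S+S*C+S+m) - 1 + (\<Sum>i=1..C-1. xh (m+1) i)"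
  unfolding g0_flat_def Let_def
  by (auto simp: fun_upd_apply intro!: sum.cong)

lemma g_aux1: "2 \<le> S \<Longrightarrow> g0_flat S C fvle fhl fhold eps P n H xh e (S - 1) =
  (\<Sum>i=1..C. eL S C e 1 * (exx S C xh e 2 i - exx S C xh e 1 i) - e (S - 1) * (ey S C e 1 i - exx S C xh e 1 i)) / n 1"
  unfolding g0_flat_def Let_def ey_def exx_def eL_def
  by auto

lemma g_auxm: "2 \<le> j \<Longrightarrow> j < S \<Longrightarrow> g0_flat S C fvle fhl fhold eps P n H xh e (S - j) =
  (\<Sum>i=1..C. eL S C e j * (exx S C xh e (j+1) i - exx S C xh e j i) - e (S - j) * (ey S C e j i - exx S C xh e j i)
     + e (S - (j - 1)) * (ey S C e (j - 1) i - exx S C xh e j i)) / n j"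
proof -
  assume a: "2 \<le> j" "j < S"
  then have h: "S - (S - j) = j" by simp
  show ?thesis
  unfolding g0_flat_def Let_def ey_def exx_def eL_def h
  using a by auto
qed

lemma g_auxS: "2 \<le> S \<Longrightarrow> g0_flat S C fvle fhl fhold eps P n H xh e 0 =
  (\<Sum>i=1..C. eps * e 0 * (exx S C xh e S i - ey S C e S i) + e 1 * (ey S C e (S - 1) i - exx S C xh e S i)) / n S"
  unfolding g0_flat_def Let_def ey_def exx_def eL_def
  by auto

lemma g_const: "2 \<le> S \<Longrightarrow> 1 \<le> C \<Longrightarrow> 0 < k \<Longrightarrow>
   g0_flat S C fvle fhl fhold eps P n H xh (e(0 := s)) k = g0_flat S C fvle fhl fhold eps P n H xh e k"
proof -
  assume a: "2 \<le> S" "1 \<le> C" "0 < k"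
  have u: "\<And>m. (e(0 := s)) (S + S*C + S + m) = e (S + S*C + S + m)" using a by simp
  show ?thesis
  unfolding g0_flat_def Let_def u
  using a by (auto simp: fun_upd_apply intro!: sum.cong)
qed


theorem mainTheorem5:
  fixes S C :: nat and I :: "real set"
    and fvle :: "nat \<Rightarrow> real \<Rightarrow> real \<Rightarrow> (nat \<Rightarrow> real) \<Rightarrow> real"
    and fhl fhv :: "real \<Rightarrow> (nat \<Rightarrow> real) \<Rightarrow> real"
    and fhold :: "real \<Rightarrow> real"
    and eps P Q Tc :: "real \<Rightarrow> real"
    and n H T V L :: "nat \<Rightarrow> real \<Rightarrow> real"
    and x y :: "nat \<Rightarrow> nat \<Rightarrow> real \<Rightarrow> real"
  assumes S2: "S \<ge> 2" and C2: "C \<ge> 2" and I_int: "is_interval I"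
    and fvle_C1: "\<forall>i\<in>{1..C}. C1_fin (C + 2) (\<lambda>z. fvle i (z 0) (z 1) (rv C (\<lambda>k. z (k + 1))))"
    and fhl_C1: "C1_fin (C + 1) (\<lambda>z. fhl (z 0) (rv C z))"
    and fhv_C1: "C1_fin (C + 1) (\<lambda>z. fhv (z 0) (rv C z))"
    and fhold_C1: "C1_real fhold"
    and ctrl_C1: "C1_on I eps" "C1_on I P" "C1_on I Q" "C1_on I Tc"
    and state_C1: "\<forall>j\<in>{1..S}. C1_on I (n j) \<and> C1_on I (H j) \<and> C1_on I (T j) \<and> C1_on I (V j)"
      "\<forall>j\<in>{1..S}. \<forall>i\<in>{1..C}. C1_on I (x j i) \<and> C1_on I (y j i)"
      "\<forall>j\<in>{1..S-1}. C1_on I (L j)"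
    and TM: "\<forall>t\<in>I. (n 1 has_real_derivative (L 1 t - V 1 t)) (at t within I)"
      "\<forall>j\<in>{2..S-1}. \<forall>t\<in>I. (n j has_real_derivative
          (L j t - V j t - L (j - 1) t + V (j - 1) t)) (at t within I)"
      "\<forall>t\<in>I. (n S has_real_derivative
          (- eps t * V S t - L (S - 1) t + V (S - 1) t)) (at t within I)"
    and CM: "\<forall>i\<in>{1..C-1}. \<forall>t\<in>I. (x 1 i has_real_derivative
          ((L 1 t * (x 2 i t - x 1 i t) - V 1 t * (y 1 i t - x 1 i t)) / n 1 t)) (at t within I)"
      "\<forall>j\<in>{2..S-1}. \<forall>i\<in>{1..C-1}. \<forall>t\<in>I. (x j i has_real_derivative
          ((L j t * (x (j + 1) i t - x j i t) - V j t * (y j i t - x j i t)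
            + V (j - 1) t * (y (j - 1) i t - x j i t)) / n j t)) (at t within I)"
      "\<forall>i\<in>{1..C-1}. \<forall>t\<in>I. (x S i has_real_derivative
          ((eps t * V S t * (x S i t - y S i t) + V (S - 1) t * (y (S - 1) i t - x S i t)) / n S t))
          (at t within I)"
    and EB: "\<forall>t\<in>I. (H 1 has_real_derivative
          (L 1 t * fhl (T 2 t) (rv C (\<lambda>i. x 2 i t)) - V 1 t * fhv (T 1 t) (rv C (\<lambda>i. y 1 i t)) + Q t))
          (at t within I)"
      "\<forall>j\<in>{2..S-1}. \<forall>t\<in>I. (H j has_real_derivative
          (L j t * fhl (T (j + 1) t) (rv C (\<lambda>i. x (j + 1) i t))
           - V j t * fhv (T j t) (rv C (\<lambda>i. y j i t))
           - L (j - 1) t * fhl (T j t) (rv C (\<lambda>i. x j i t))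
           + V (j - 1) t * fhv (T (j - 1) t) (rv C (\<lambda>i. y (j - 1) i t)))) (at t within I)"
      "\<forall>t\<in>I. (H S has_real_derivative
          ((1 - eps t) * V S t * fhl (Tc t) (rv C (\<lambda>i. y S i t))
           - V S t * fhv (T S t) (rv C (\<lambda>i. y S i t))
           - L (S - 1) t * fhl (T S t) (rv C (\<lambda>i. x S i t))
           + V (S - 1) t * fhv (T (S - 1) t) (rv C (\<lambda>i. y (S - 1) i t)))) (at t within I)"
    and ALG: "\<forall>t\<in>I. \<forall>k<dimEta S C.
          g0_flat S C fvle fhl fhold (eps t) (P t) (\<lambda>j. n j t) (\<lambda>j. H j t) (\<lambda>j i. x j i t)
            (eta_flat S C (\<lambda>j. V j t) (\<lambda>j i. y j i t) (\<lambda>j. T j t) (\<lambda>j. x j C t) (\<lambda>j. L j t)) k = 0"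
    and eps_nz: "\<forall>t\<in>I. eps t \<noteq> 0"
    and n_nz: "\<forall>j\<in>{1..S}. \<forall>t\<in>I. n j t \<noteq> 0"
    and V_nz: "\<forall>j\<in>{1..S}. \<forall>t\<in>I. V j t \<noteq> 0"
  shows "\<forall>t\<in>I. det (jac_g0 S C fvle fhl fhold (eps t) (P t) (\<lambda>j. n j t) (\<lambda>j. H j t) (\<lambda>j i. x j i t)
            (eta_flat S C (\<lambda>j. V j t) (\<lambda>j i. y j i t) (\<lambda>j. T j t) (\<lambda>j. x j C t) (\<lambda>j. L j t))) = 0"
proof
  fix t assume t: "t \<in> I"
  define e where "e = eta_flat S C (\<lambda>j. V j t) (\<lambda>j i. y j i t) (\<lambda>j. T j t) (\<lambda>j. x j C t) (\<lambda>j. L j t)"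
  define xh where "xh = (\<lambda>j i. x j i t)"
  define g where "g = g0_flat S C fvle fhl fhold (eps t) (P t) (\<lambda>j. n j t) (\<lambda>j. H j t) xh"
  have G: "\<And>k. k < dimEta S C \<Longrightarrow> g e k = 0" using ALG t by (simp add: g_def e_def xh_def)
  have eVt: "\<And>j. 1 \<le> j \<Longrightarrow> j \<le> S \<Longrightarrow> e (S - j) = V j t" by (simp add: e_def eV)
  have eyt: "\<And>j i. 1 \<le> j \<Longrightarrow> j \<le> S \<Longrightarrow> 1 \<le> i \<Longrightarrow> i \<le> C \<Longrightarrow> ey S C e j i = y j i t"
    unfolding ey_def e_def by (rule ey)
  have ext: "\<And>j i. 1 \<le> j \<Longrightarrow> j \<le> S \<Longrightarrow> 1 \<le> i \<Longrightarrow> i \<le> C \<Longrightarrow> exx S C xh e j i = x j i t"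
    unfolding exx_def e_def xh_def using exC by simp
  have eLt: "\<And>j. 1 \<le> j \<Longrightarrow> eL S C e j = L j t"
    unfolding eL_def e_def by (rule eL)
  have nz: "\<And>j. 1 \<le> j \<Longrightarrow> j \<le> S \<Longrightarrow> n j t \<noteq> 0 \<and> V j t \<noteq> 0"
    using n_nz V_nz t by auto
  have X: "(\<Sum>i=1..C. x j i t) = 1" if j: "1 \<le> j" "j \<le> S" for j
  proof -
    have "S+S*C+S+(j-1) < dimEta S C" using j by (simp add: dimEta_def)
    then have "g e (S+S*C+S+(j-1)) = 0" by (rule G)
    moreover have "g e (S+S*C+S+(j-1)) = e (S+S*C+S+(j-1)) - 1 + (\<Sum>i=1..C-1. xh (j-1+1) i)"
      unfolding g_def using j by (intro g_xsum) auto
    moreover have "e (S+S*C+S+(j-1)) = x j C t" using j unfolding e_def by (rule exC)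
    ultimately have "x j C t - 1 + (\<Sum>i=1..C-1. x j i t) = 0" using j by (simp add: xh_def)
    moreover have "(\<Sum>i=1..C. x j i t) = (\<Sum>i=1..C-1. x j i t) + x j C t"
    proof -
      obtain c where c: "C = Suc c" using C2 by (cases C) auto
      have "(\<Sum>i=1..Suc c. x j i t) = (\<Sum>i=1..c. x j i t) + x j (Suc c) t"
        by (simp add: sum.cl_ivl_Suc)
      then show ?thesis unfolding c by simp
    qed
    ultimately show ?thesis by simp
  qed
  have sum2: "\<And>(a::real) b p q r. (\<Sum>i=1..C. a*(p i - q i) - b*(r i - q i)) =
     a*(sum p {1..C} - sum q {1..C}) - b*(sum r {1..C} - sum q {1..C})"
    by (simp add: sum_subtractf sum_distrib_left right_diff_distrib sum.distrib)
  have sum3: "\<And>(a::real) b c p q r w. (\<Sum>i=1..C. a*(p i - q i) - b*(r i - q i) + c*(w i - q i)) =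
     a*(sum p {1..C} - sum q {1..C}) - b*(sum r {1..C} - sum q {1..C}) + c*(sum w {1..C} - sum q {1..C})"
    by (simp add: sum_subtractf sum_distrib_left right_diff_distrib sum.distrib)
  have Y: "1 \<le> j \<longrightarrow> j \<le> S - 1 \<longrightarrow> (\<Sum>i=1..C. y j i t) = 1" for j
  proof (induction j)
    case 0 then show ?case by simp
  next
    case (Suc j)
    show ?case
    proof (intro impI)
      assume j1: "1 \<le> Suc j" and j2: "Suc j \<le> S - 1"
      show "(\<Sum>i=1..C. y (Suc j) i t) = 1"
      proof (cases "j = 0")
        case True
        have "S - 1 < dimEta S C" using S2 by (simp add: dimEta_def)
        then have "g e (S - 1) = 0" by (rule G)
        moreover have "g e (S - 1) = (\<Sum>i=1..C. eL S C e 1 * (exx S C xh e 2 i - exx S C xh e 1 i) - e (S - 1) * (ey S C e 1 i - exx S C xh e 1 i)) / n 1 t"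
          unfolding g_def using S2 by (rule g_aux1)
        moreover have "(\<Sum>i=1..C. eL S C e 1 * (exx S C xh e 2 i - exx S C xh e 1 i) - e (S - 1) * (ey S C e 1 i - exx S C xh e 1 i))
           = (\<Sum>i=1..C. L 1 t * (x 2 i t - x 1 i t) - V 1 t * (y 1 i t - x 1 i t))"
          using S2 by (intro sum.cong) (auto simp: eyt ext eLt eVt)
        ultimately have "(\<Sum>i=1..C. L 1 t * (x 2 i t - x 1 i t) - V 1 t * (y 1 i t - x 1 i t)) = 0"
          using nz[of 1] S2 by simp
        then have "- V 1 t * ((\<Sum>i=1..C. y 1 i t) - 1) = 0"
          unfolding sum2 using X[of 1] X[of 2] S2 by simp
        then show ?thesis using nz[of 1] S2 True by simp
      next
        case False
        let ?j = "Suc j"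
        have IH: "(\<Sum>i=1..C. y j i t) = 1" using Suc.IH False j2 by simp
        have "S - ?j < dimEta S C" using S2 by (simp add: dimEta_def)
        then have "g e (S - ?j) = 0" by (rule G)
        moreover have "g e (S - ?j) = (\<Sum>i=1..C. eL S C e ?j * (exx S C xh e (?j+1) i - exx S C xh e ?j i) - e (S - ?j) * (ey S C e ?j i - exx S C xh e ?j i)
     + e (S - (?j - 1)) * (ey S C e (?j - 1) i - exx S C xh e ?j i)) / n ?j t"
          unfolding g_def using False j2 by (intro g_auxm) auto
        moreover have "(\<Sum>i=1..C. eL S C e ?j * (exx S C xh e (?j+1) i - exx S C xh e ?j i) - e (S - ?j) * (ey S C e ?j i - exx S C xh e ?j i)
     + e (S - (?j - 1)) * (ey S C e (?j - 1) i - exx S C xh e ?j i))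
           = (\<Sum>i=1..C. L ?j t * (x (?j+1) i t - x ?j i t) - V ?j t * (y ?j i t - x ?j i t) + V j t * (y j i t - x ?j i t))"
          using False j2 by (intro sum.cong) (auto simp: eyt ext eLt eVt)
        ultimately have "(\<Sum>i=1..C. L ?j t * (x (?j+1) i t - x ?j i t) - V ?j t * (y ?j i t - x ?j i t) + V j t * (y j i t - x ?j i t)) = 0"
          using nz[of ?j] j2 by simp
        then have "- V ?j t * ((\<Sum>i=1..C. y ?j i t) - 1) = 0"
          unfolding sum3 using X[of ?j] X[of "?j+1"] IH j2 by simp
        then show ?thesis using nz[of ?j] j2 by simp
      qed
    qed
  qed
  have YS: "(\<Sum>i=1..C. y S i t) = 1"
  proof -
    have "0 < dimEta S C" using S2 by (simp add: dimEta_def)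
    then have "g e 0 = 0" by (rule G)
    moreover have "g e 0 = (\<Sum>i=1..C. eps t * e 0 * (exx S C xh e S i - ey S C e S i) + e 1 * (ey S C e (S - 1) i - exx S C xh e S i)) / n S t"
      unfolding g_def using S2 by (rule g_auxS)
    moreover have "(\<Sum>i=1..C. eps t * e 0 * (exx S C xh e S i - ey S C e S i) + e 1 * (ey S C e (S - 1) i - exx S C xh e S i))
      = (\<Sum>i=1..C. eps t * V S t * (x S i t - y S i t) + V (S-1) t * (y (S-1) i t - x S i t))"
    proof -
      have "e 0 = V S t" using eVt[of S] S2 by simp
      moreover have "e 1 = V (S-1) t" using eVt[of "S-1"] S2 by simp
      ultimately show ?thesis using S2 by (intro sum.cong) (auto simp: eyt ext)
    qed
    ultimately have H0: "(\<Sum>i=1..C. eps t * V S t * (x S i t - y S i t) + V (S-1) t * (y (S-1) i t - x S i t)) = 0"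
      using nz[of S] S2 by simp
    have "eps t * V S t * (1 - (\<Sum>i=1..C. y S i t)) + V (S-1) t * ((\<Sum>i=1..C. y (S-1) i t) - 1) = 0"
    proof -
      have "\<And>(a::real) b p q r w. (\<Sum>i=1..C. a*(p i - q i) + b*(r i - w i)) =
        a*(sum p {1..C} - sum q {1..C}) + b*(sum r {1..C} - sum w {1..C})"
        by (simp add: sum_subtractf sum_distrib_left right_diff_distrib sum.distrib)
      then show ?thesis using H0 X[of S] S2 by simp
    qed
    then have "eps t * V S t * (1 - (\<Sum>i=1..C. y S i t)) = 0" using Y[of "S-1"] S2 by simp
    then show ?thesis using eps_nz t nz[of S] S2 by simp
  qed
  define J where "J = jac_g0 S C fvle fhl fhold (eps t) (P t) (\<lambda>j. n j t) (\<lambda>j. H j t) xh e"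
  have dpos: "0 < dimEta S C" using S2 by (simp add: dimEta_def)
  have Jc: "J \<in> carrier_mat (dimEta S C) (dimEta S C)" unfolding J_def jac_g0_def by simp
  have col: "J $$ (k, 0) = 0" if k: "k < dimEta S C" for k
  proof -
    have Jk: "J $$ (k, 0) = deriv (\<lambda>s. g (e(0 := s)) k) (e 0)"
      unfolding J_def jac_g0_def g_def using k dpos by simp
    show ?thesis
    proof (cases "k = 0")
      case False
      have "(\<lambda>s. g (e(0 := s)) k) = (\<lambda>s. g e k)"
        unfolding g_def using S2 C2 False by (simp add: g_const)
      then show ?thesis unfolding Jk by (simp add: DERIV_imp_deriv[OF DERIV_const])
    next
      case True
      define A where "A = (\<Sum>i=1..C. exx S C xh e S i - ey S C e S i)"
      define B where "B = (\<Sum>i=1..C. e 1 * (ey S C e (S - 1) i - exx S C xh e S i))"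
      have f: "g (e(0 := s)) 0 = (eps t * s * A + B) / n S t" for s
      proof -
        have u1: "exx S C xh (e(0 := s)) j i = exx S C xh e j i" for j i
          unfolding exx_def using S2 by auto
        have u2: "ey S C (e(0 := s)) j i = ey S C e j i" for j i
          unfolding ey_def using S2 by auto
        have "g (e(0 := s)) 0 = (\<Sum>i=1..C. eps t * s * (exx S C xh e S i - ey S C e S i) + e 1 * (ey S C e (S - 1) i - exx S C xh e S i)) / n S t"
          unfolding g_def using g_auxS[OF S2, of C fvle fhl fhold "eps t" "P t" "\<lambda>j. n j t" "\<lambda>j. H j t" xh "e(0 := s)"]
          by (simp add: u1 u2)
        also have "\<dots> = (eps t * s * A + B) / n S t"
          unfolding A_def B_def by (simp add: sum.distrib sum_distrib_left)
        finally show ?thesis .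
      qed
      have A0: "A = 0"
      proof -
        have "A = (\<Sum>i=1..C. x S i t - y S i t)"
          unfolding A_def using S2 by (intro sum.cong) (auto simp: eyt ext)
        also have "\<dots> = 0" using X[of S] YS S2 by (simp add: sum_subtractf)
        finally show ?thesis .
      qed
      have "((\<lambda>s. g (e(0 := s)) 0) has_real_derivative (eps t * A / n S t)) (at (e 0))"
        unfolding f using nz[of S] S2 by (auto intro!: derivative_eq_intros)
      then have "deriv (\<lambda>s. g (e(0 := s)) 0) (e 0) = 0"
        using A0 by (simp add: DERIV_imp_deriv)
      then show ?thesis using Jk True by simp
    qed
  qed
  have "det J = 0" by (rule det_zero_col0[OF Jc dpos col])
  then show "det (jac_g0 S C fvle fhl fhold (eps t) (P t) (\<lambda>j. n j t) (\<lambda>j. H j t) (\<lambda>j i. x j i t)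
            (eta_flat S C (\<lambda>j. V j t) (\<lambda>j i. y j i t) (\<lambda>j. T j t) (\<lambda>j. x j C t) (\<lambda>j. L j t))) = 0"
    unfolding J_def e_def xh_def .
qed

end
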